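(* Let $d\in\mathbb{N}$, $0<s,p<\infty$ with $sp\ne d$. Let $\mathbb{Z}_+=\{0,1,\ldots\}$, $\|x\|_\infty=\max_i|x_i|$, and define $A_0=\{0\}$ and, for $n\ge1$, $A_n=\mathbb{Z}_+^d\cap[0,2^n-1]^d\setminus[0,2^{n-1}-1]^d$. Let $K\in\mathbb{N}$ satisfy \[2^{sp+1}(2^{p-1}\vee1)\,2^{-K|sp-d|}\le1,\] and let \[C(d,p,s,K)=\frac{2^{sp+1+K(d\wedge sp)}(2^{p-1}\vee1)}{1-2^{-d}}.\] If $sp<d$, then \[\sum_{j\in\mathbb{Z}_+^d\setminus\{0\}}\frac{|u(j)|^p}{\|j\|_\infty^{sp}}\le C(d,p,s,K)\sum_{n=1}^\infty\sum_{j\in A_n}\sum_{m\in A_{n+K}}\frac{|u(j)-u(m)|^p}{2^{(n+K)(d+sp)}}\] for all $u:\mathbb{Z}_+^d\to\mathbb{C}$ for which the left side is finite. If $d<sp$, then \[\sum_{\substack{j\in\mathbb{Z}_+^d\\ 2^K\le\|j\|_\infty}}\frac{|u(j)|^p}{\|j\|_\infty^{sp}}\le C(d,p,s,K)\sum_{n=1}^\infty\sum_{j\in A_n}\sum_{m\in A_{n+K}}\frac{|u(j)-u(m)|^p}{2^{(n+K)(d+sp)}}+\sum_{\substack{j\in\mathbb{Z}_+^d\\ 1\le\|j\|_\infty<2^K}}\frac{|u(j)|^p}{\|j\|_\infty^{sp}}\] for all $u:\mathbb{Z}_+^d\to\mathbb{C}$.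
   Context: $a\wedge b=\min(a,b)$, $a\vee b=\max(a,b)$. *)

theory Defs
  imports "HOL-Analysis.Analysis"
begin

text \<open>Points of Z_+^d are functions from a finite index type 'n (with d = CARD('n)) to nat.\<close>

definition supnorm :: "('n::finite \<Rightarrow> nat) \<Rightarrow> nat" where
  "supnorm j = Max (range j)"

definition Ablock :: "nat \<Rightarrow> ('n::finite \<Rightarrow> nat) set" where
  "Ablock n = (if n = 0 then {\<lambda>_. 0}
     else {j. \<forall>i. j i \<le> 2^n - 1} - {j. \<forall>i. j i \<le> 2^(n-1) - 1})"

definition Cconst :: "nat \<Rightarrow> real \<Rightarrow> real \<Rightarrow> nat \<Rightarrow> real" where
  "Cconst d p s K = 2 powr (s*p + 1 + real K * min (real d) (s*p)) * max (2 powr (p-1)) 1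
      / (1 - 2 powr (- real d))"

definition Rside :: "nat \<Rightarrow> real \<Rightarrow> real \<Rightarrow> (('n::finite \<Rightarrow> nat) \<Rightarrow> complex) \<Rightarrow> ennreal" where
  "Rside K p s u = (\<Sum>\<^sub>\<infinity> n\<in>{1..}. \<Sum>j\<in>Ablock n. \<Sum>m\<in>Ablock (n+K).
      ennreal (norm (u j - u m) powr p / 2 powr (real (n+K) * (real CARD('n) + s*p))))"

end

theory Submission
  imports Defs
begin


lemma powr_add_le_c:
  fixes x y p :: real assumes x: "0 \<le> x" and y: "0 \<le> y" and p: "0 < p"
  shows "(x+y) powr p \<le> max (2 powr (p-1)) 1 * (x powr p + y powr p)"
proof (cases "x = 0 \<or> y = 0")
  case True
  have "(x+y) powr p \<le> 1 * (x powr p + y powr p)" using True x y by auto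
  also have "\<dots> \<le> max (2 powr (p-1)) 1 * (x powr p + y powr p)"
    by (intro mult_right_mono) auto
  finally show ?thesis .
next
  case False
  then have xp: "x > 0" and yp: "y > 0" using x y by auto
  show ?thesis
  proof (cases "p \<ge> 1")
    case True
    have "((1 - 1/2) *\<^sub>R x + (1/2) *\<^sub>R y) powr p \<le> (1 - 1/2) * x powr p + (1/2) * y powr p"
      using convex_onD[OF powr_convex[OF True], of "1/2" x y] xp yp by auto
    then have h: "((x+y)/2) powr p \<le> (x powr p + y powr p)/2" by (simp add: field_simps)
    have e2: "2 * ((x+y)/2) = x+y" by simp
    have "(x+y) powr p = (2 * ((x+y)/2)) powr p" by (simp only: e2)
    also have "\<dots> = 2 powr p * ((x+y)/2) powr p" by (subst powr_mult) auto
    also have "\<dots> \<le> 2 powr p * ((x powr p + y powr p)/2)" using h by (intro mult_left_mono) auto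
    also have "\<dots> = 2 powr (p-1) * (x powr p + y powr p)" by (simp add: powr_diff)
    also have "\<dots> \<le> max (2 powr (p-1)) 1 * (x powr p + y powr p)"
      by (intro mult_right_mono) auto
    finally show ?thesis .
  next
    case False
    have key: "a powr p \<ge> a * (x+y) powr (p-1)" if "0 < a" "a \<le> x + y" for a
    proof -
      have "a/(x+y) = (a/(x+y)) powr 1" using that xp yp by simp
      also have "\<dots> \<le> (a/(x+y)) powr p" using that xp yp False
        by (intro powr_mono') auto
      also have "\<dots> = a powr p / (x+y) powr p" by (simp add: powr_divide that xp yp)
      finally have "a/(x+y) \<le> a powr p / (x+y) powr p" .
      then have "a/(x+y) * (x+y) powr p \<le> a powr p" using xp yp by (simp add: field_simps)
      moreover have "(x+y) powr p = (x+y) * (x+y) powr (p-1)" using xp yp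
        by (simp add: powr_diff)
      ultimately have "a/(x+y) * ((x+y) * (x+y) powr (p-1)) \<le> a powr p" by simp
      moreover have "a/(x+y) * ((x+y) * (x+y) powr (p-1)) = a * (x+y) powr (p-1)"
        using xp yp by (simp add: field_simps)
      ultimately show ?thesis by simp
    qed
    have "(x+y) powr p = (x+y) * (x+y) powr (p-1)" using xp yp by (simp add: powr_diff)
    also have "\<dots> = x * (x+y) powr (p-1) + y * (x+y) powr (p-1)" by (simp add: algebra_simps)
    also have "\<dots> \<le> x powr p + y powr p" using key[of x] key[of y] xp yp by auto
    also have "\<dots> = 1 * (x powr p + y powr p)" by simp
    also have "\<dots> \<le> max (2 powr (p-1)) 1 * (x powr p + y powr p)"
      by (intro mult_right_mono) auto
    finally show ?thesis .
  qed
qed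

lemma supnorm_le_iff: "supnorm (j::'n::finite \<Rightarrow> nat) \<le> M \<longleftrightarrow> (\<forall>i. j i \<le> M)"
  unfolding supnorm_def by (subst Max_le_iff) auto

lemma supnorm_ge: "(j::'n::finite \<Rightarrow> nat) i \<le> supnorm j"
  unfolding supnorm_def by (rule Max_ge) auto

lemma supnorm_zero_iff: "supnorm (j::'n::finite \<Rightarrow> nat) = 0 \<longleftrightarrow> j = (\<lambda>_. 0)"
  using supnorm_le_iff[of j 0] by auto

lemma Ablock_iff:
  assumes "n \<ge> 1"
  shows "(j::'n::finite \<Rightarrow> nat) \<in> Ablock n \<longleftrightarrow> 2^(n-1) \<le> supnorm j \<and> supnorm j < 2^n"
proof -
  have a: "(\<forall>i. j i \<le> 2^n - 1) \<longleftrightarrow> supnorm j < 2^n"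
    using supnorm_le_iff[of j "2^n-1"] by (metis One_nat_def Suc_pred le_simps(2) pos2 zero_less_power)
  have b: "(\<forall>i. j i \<le> 2^(n-1) - 1) \<longleftrightarrow> supnorm j < 2^(n-1)"
    using supnorm_le_iff[of j "2^(n-1)-1"] by (metis One_nat_def Suc_pred le_simps(2) pos2 zero_less_power)
  show ?thesis using assms a b unfolding Ablock_def by auto
qed

lemma Ablock_0: "Ablock 0 = {\<lambda>_. 0}" unfolding Ablock_def by simp

lemma Ablock_disj:
  assumes "n \<noteq> m" shows "Ablock n \<inter> (Ablock m :: ('n::finite \<Rightarrow> nat) set) = {}"
proof -
  have "False" if "j \<in> Ablock n" "j \<in> Ablock m" for j :: "'n \<Rightarrow> nat"
  proof (cases "n = 0 \<or> m = 0")
    case True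
    then show False using that assms Ablock_iff[of n j] Ablock_iff[of m j] supnorm_zero_iff[of j]
      by (auto simp: Ablock_0)
  next
    case False
    then have "2^(n-1) \<le> supnorm j" "supnorm j < 2^n" "2^(m-1) \<le> supnorm j" "supnorm j < 2^m"
      using that Ablock_iff[of n j] Ablock_iff[of m j] by auto
    then have "2^(n-1) < (2::nat)^m" "2^(m-1) < (2::nat)^n" by linarith+
    then have "n - 1 < m" "m - 1 < n" using power_less_imp_less_exp by (metis one_less_numeral_iff semiring_norm(76))+
    then show False using assms False by auto
  qed
  then show ?thesis by blast
qed

lemma union_Ablock:
  "{j::'n::finite \<Rightarrow> nat. 2^a \<le> supnorm j \<and> supnorm j < 2^b} = (\<Union>n\<in>{a+1..b}. Ablock n)"
proof (intro set_eqI iffI)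
  fix j :: "'n \<Rightarrow> nat" assume "j \<in> {j. 2^a \<le> supnorm j \<and> supnorm j < 2^b}"
  then have h: "2^a \<le> supnorm j" "supnorm j < 2^b" by auto
  then have "supnorm j \<ge> 1" by (metis le_trans one_le_numeral one_le_power)
  then obtain k where k: "2^k \<le> supnorm j" "supnorm j < 2^(k+1)" using ex_power_ivl1[of 2 "supnorm j"] by auto
  have "a < k + 1" using h k by (metis le_less_trans nat_power_less_imp_less pos2)
  moreover have "k < b" using h k by (metis le_less_trans nat_power_less_imp_less pos2)
  moreover have "j \<in> Ablock (k+1)" using k Ablock_iff[of "k+1" j] by auto
  ultimately show "j \<in> (\<Union>n\<in>{a+1..b}. Ablock n)" by auto
next
  fix j :: "'n \<Rightarrow> nat" assume "j \<in> (\<Union>n\<in>{a+1..b}. Ablock n)"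
  then obtain n where n: "a+1 \<le> n" "n \<le> b" "j \<in> Ablock n" by auto
  then have "2^(n-1) \<le> supnorm j" "supnorm j < 2^n" using Ablock_iff[of n j] by auto
  moreover have "(2::nat)^a \<le> 2^(n-1)" "(2::nat)^n \<le> 2^b" using n by (auto intro: power_increasing)
  ultimately have "2^a \<le> supnorm j" "supnorm j < 2^b" by (meson le_trans less_le_trans)+
  then show "j \<in> {j. 2^a \<le> supnorm j \<and> supnorm j < 2^b}" by simp
qed

lemma card_cube: "card {j::'n::finite \<Rightarrow> nat. \<forall>i. j i \<le> M} = (M+1)^CARD('n)"
proof -
  have "{j::'n \<Rightarrow> nat. \<forall>i. j i \<le> M} = PiE UNIV (\<lambda>_. {..M})"
    by (auto simp: PiE_UNIV_domain Pi_def)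
  then show ?thesis by (simp add: card_PiE)
qed

lemma finite_cube: "finite {j::'n::finite \<Rightarrow> nat. \<forall>i. j i \<le> M}"
proof -
  have "{j::'n \<Rightarrow> nat. \<forall>i. j i \<le> M} = PiE UNIV (\<lambda>_. {..M})"
    by (auto simp: PiE_UNIV_domain Pi_def)
  then show ?thesis by (simp add: finite_PiE)
qed

lemma finite_Ablock: "finite (Ablock n :: ('n::finite \<Rightarrow> nat) set)"
  unfolding Ablock_def using finite_cube by auto

lemma card_Ablock:
  assumes "n \<ge> 1"
  shows "real (card (Ablock n :: ('n::finite \<Rightarrow> nat) set)) = 2^(n*CARD('n)) * (1 - 2 powr (- real CARD('n)))"
proof -
  let ?d = "CARD('n)"
  have sub: "{j::'n \<Rightarrow> nat. \<forall>i. j i \<le> 2^(n-1) - 1} \<subseteq> {j. \<forall>i. j i \<le> 2^n - 1}"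
    using assms by (auto intro: le_trans[OF _ diff_le_mono[OF power_increasing]])
  have "card (Ablock n :: ('n \<Rightarrow> nat) set) = (2^n - 1 + 1)^?d - (2^(n-1) - 1 + 1)^?d"
    unfolding Ablock_def using assms card_Diff_subset[OF finite_cube sub] by (simp add: card_cube)
  also have "\<dots> = 2^(n*?d) - 2^((n-1)*?d)" by (simp add: power_mult)
  finally have c: "card (Ablock n :: ('n \<Rightarrow> nat) set) = 2^(n*?d) - 2^((n-1)*?d)" .
  have le: "(2::nat)^((n-1)*?d) \<le> 2^(n*?d)" by (intro power_increasing) auto
  have "real (card (Ablock n :: ('n \<Rightarrow> nat) set)) = 2^(n*?d) - 2^((n-1)*?d)"
    using c le by (simp add: of_nat_diff)
  also have "(2::real)^(n*?d) = 2^((n-1)*?d) * 2^?d" using assms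
    by (metis (no_types) add.commute le_add_diff_inverse2 mult.commute mult_Suc_right power_add Suc_eq_plus1)
  moreover have "(2::real) powr (- real ?d) = 1 / 2^?d" by (simp add: powr_minus powr_realpow divide_inverse)
  moreover have "(X::real) * P - X = X * P * (1 - 1 / P)" if "P > 0" for X P
    using that by (simp add: field_simps)
  ultimately show ?thesis by simp
qed
lemma norm_powr_le_c:
  fixes a b :: complex assumes p: "0 < p"
  shows "norm a powr p \<le> max (2 powr (p-1)) 1 * (norm (a - b) powr p + norm b powr p)"
proof -
  have "norm a \<le> norm (a - b) + norm b" using norm_triangle_ineq[of "a-b" b] by simp
  then have "norm a powr p \<le> (norm (a - b) + norm b) powr p" using p by (intro powr_mono2) auto
  also have "\<dots> \<le> max (2 powr (p-1)) 1 * (norm (a - b) powr p + norm b powr p)"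
    using p by (intro powr_add_le_c) auto
  finally show ?thesis .
qed

lemma block_sum_ineq:
  fixes u :: "'a \<Rightarrow> complex" assumes p: "0 < p" and fA: "finite A" and fB: "finite B"
  shows "real (card B) * (\<Sum>j\<in>A. norm (u j) powr p)
     \<le> max (2 powr (p-1)) 1 * ((\<Sum>j\<in>A. \<Sum>m\<in>B. norm (u j - u m) powr p)
                                 + real (card A) * (\<Sum>m\<in>B. norm (u m) powr p))"
proof -
  let ?c = "max (2 powr (p-1)) 1"
  have "real (card B) * (\<Sum>j\<in>A. norm (u j) powr p) = (\<Sum>j\<in>A. \<Sum>m\<in>B. norm (u j) powr p)"
    by (simp add: sum_distrib_left)
  also have "\<dots> \<le> (\<Sum>j\<in>A. \<Sum>m\<in>B. ?c * (norm (u j - u m) powr p + norm (u m) powr p))"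
    by (intro sum_mono norm_powr_le_c p)
  also have "\<dots> = ?c * ((\<Sum>j\<in>A. \<Sum>m\<in>B. norm (u j - u m) powr p)
                                 + real (card A) * (\<Sum>m\<in>B. norm (u m) powr p))"
    by (simp add: sum_distrib_left[symmetric] sum.distrib distrib_left)
  finally show ?thesis .
qed

lemma block_sum_ineq':
  fixes u :: "'a \<Rightarrow> complex" assumes p: "0 < p" and fA: "finite A" and fB: "finite B"
  shows "real (card A) * (\<Sum>m\<in>B. norm (u m) powr p)
     \<le> max (2 powr (p-1)) 1 * ((\<Sum>j\<in>A. \<Sum>m\<in>B. norm (u j - u m) powr p)
                                 + real (card B) * (\<Sum>j\<in>A. norm (u j) powr p))"
proof -
  have "(\<Sum>m\<in>B. \<Sum>j\<in>A. norm (u m - u j) powr p) = (\<Sum>j\<in>A. \<Sum>m\<in>B. norm (u j - u m) powr p)"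
    by (subst sum.swap) (simp add: norm_minus_commute)
  then show ?thesis using block_sum_ineq[OF p fB fA, of u] by simp
qed

lemma alg1:
  fixes X Y Z W \<beta> c a a' D :: real
  assumes "X > 0" "Y > 0" "Z > 0" "W > 0" "\<beta> > 0"
    and h: "(X*Y*\<beta>) * a \<le> c * (D + (X*\<beta>) * a')"
  shows "a / Z \<le> (c * W / \<beta>) * (D / (X*Y*Z*W)) + (c * (W / Y)) * (a' / (Z*W))"
proof -
  have e: "(c * W / \<beta>) * (D / (X*Y*Z*W)) + (c * (W / Y)) * (a' / (Z*W)) = c * (D + (X*\<beta>) * a') / (X*Y*\<beta>*Z)"
    using assms by (simp add: field_simps)
  have "a / Z = (X*Y*\<beta>) * a / (X*Y*\<beta>*Z)" using assms by (simp add: field_simps)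
  also have "\<dots> \<le> c * (D + (X*\<beta>) * a') / (X*Y*\<beta>*Z)"
    using h assms by (intro divide_right_mono) auto
  finally show ?thesis using e by simp
qed

lemma alg2:
  fixes X Y Z W \<beta> c a a' D :: real
  assumes "X > 0" "Y > 0" "Z > 0" "W > 0" "\<beta> > 0"
    and h: "(X*\<beta>) * a' \<le> c * (D + (X*Y*\<beta>) * a)"
  shows "a' / (Z*W) \<le> (c * Y / \<beta>) * (D / (X*Y*Z*W)) + (c * (Y / W)) * (a / Z)"
proof -
  have e: "(c * Y / \<beta>) * (D / (X*Y*Z*W)) + (c * (Y / W)) * (a / Z) = c * (D + (X*Y*\<beta>) * a) / (X*\<beta>*Z*W)"
    using assms by (simp add: field_simps)
  have "a' / (Z*W) = (X*\<beta>) * a' / (X*\<beta>*Z*W)" using assms by (simp add: field_simps)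
  also have "\<dots> \<le> c * (D + (X*Y*\<beta>) * a) / (X*\<beta>*Z*W)"
    using h assms by (intro divide_right_mono) auto
  finally show ?thesis using e by simp
qed
definition aS :: "(('n::finite \<Rightarrow> nat) \<Rightarrow> complex) \<Rightarrow> real \<Rightarrow> nat \<Rightarrow> real" where
  "aS u p n = (\<Sum>j\<in>Ablock n. norm (u j) powr p)"

definition DS :: "(('n::finite \<Rightarrow> nat) \<Rightarrow> complex) \<Rightarrow> real \<Rightarrow> nat \<Rightarrow> nat \<Rightarrow> real" where
  "DS u p K n = (\<Sum>j\<in>Ablock n. \<Sum>m\<in>Ablock (n+K). norm (u j - u m) powr p)"

lemma pow2_powr: "(2::real)^(m*k) = 2 powr (real m * real k)"
  by (simp add: powr_realpow[symmetric])

lemma block_ineqs: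
  fixes u :: "('n::finite \<Rightarrow> nat) \<Rightarrow> complex"
  assumes p: "0 < p" and n: "n \<ge> 1"
  defines "d \<equiv> real CARD('n)" and "c \<equiv> max (2 powr (p-1)) 1" and "\<beta> \<equiv> 1 - 2 powr (- real CARD('n))"
  shows "aS u p n / 2 powr (real n * q) \<le> (c * 2 powr (real K * q) / \<beta>) * (DS u p K n / 2 powr (real (n+K) * (d + q)))
           + (c * 2 powr (- (real K * (d - q)))) * (aS u p (n+K) / 2 powr (real (n+K) * q))"
    and "aS u p (n+K) / 2 powr (real (n+K) * q) \<le> (c * 2 powr (real K * d) / \<beta>) * (DS u p K n / 2 powr (real (n+K) * (d + q)))
           + (c * 2 powr (- (real K * (q - d)))) * (aS u p n / 2 powr (real n * q))"
proof -
  define X where "X = (2::real) powr (real n * d)"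
  define Y where "Y = (2::real) powr (real K * d)"
  define Z where "Z = (2::real) powr (real n * q)"
  define W where "W = (2::real) powr (real K * q)"
  have pos: "X > 0" "Y > 0" "Z > 0" "W > 0" unfolding X_def Y_def Z_def W_def by auto
  have dpos: "CARD('n) > 0" by simp
  have bpos: "\<beta> > 0" unfolding \<beta>_def using dpos by (simp add: powr_minus_divide)
  have cA: "real (card (Ablock n :: ('n \<Rightarrow> nat) set)) = X * \<beta>"
    using card_Ablock[OF n, where 'n='n] unfolding X_def \<beta>_def d_def by (simp add: pow2_powr)
  have cB: "real (card (Ablock (n+K) :: ('n \<Rightarrow> nat) set)) = X * Y * \<beta>"
  proof -
    have "(2::real)^((n+K)*CARD('n)) = X * Y"
      unfolding X_def Y_def d_def pow2_powr by (simp add: powr_add[symmetric] algebra_simps)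
    then show ?thesis using card_Ablock[of "n+K", where 'n='n] n unfolding \<beta>_def by simp
  qed
  have e1: "(2::real) powr (real (n+K) * (d + q)) = X*Y*Z*W"
    unfolding X_def Y_def Z_def W_def by (simp add: powr_add[symmetric] algebra_simps)
  have e2: "(2::real) powr (real (n+K) * q) = Z*W"
    unfolding Z_def W_def by (simp add: powr_add[symmetric] algebra_simps)
  have e3: "(2::real) powr (- (real K * (d - q))) = W / Y"
    unfolding Y_def W_def by (simp add: powr_diff[symmetric] algebra_simps)
  have e4: "(2::real) powr (- (real K * (q - d))) = Y / W"
    unfolding Y_def W_def by (simp add: powr_diff[symmetric] algebra_simps)
  have h1: "(X*Y*\<beta>) * aS u p n \<le> c * (DS u p K n + (X*\<beta>) * aS u p (n+K))"
    using block_sum_ineq[OF p finite_Ablock[of n] finite_Ablock[of "n+K"], where u=u] cA cB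
    unfolding aS_def DS_def c_def by simp
  have h2: "(X*\<beta>) * aS u p (n+K) \<le> c * (DS u p K n + (X*Y*\<beta>) * aS u p n)"
    using block_sum_ineq'[OF p finite_Ablock[of n] finite_Ablock[of "n+K"], where u=u] cA cB
    unfolding aS_def DS_def c_def by simp
  show "aS u p n / 2 powr (real n * q) \<le> (c * 2 powr (real K * q) / \<beta>) * (DS u p K n / 2 powr (real (n+K) * (d + q)))
           + (c * 2 powr (- (real K * (d - q)))) * (aS u p (n+K) / 2 powr (real (n+K) * q))"
    unfolding e1 e2 e3 using alg1[OF pos bpos h1] unfolding Z_def[symmetric] W_def[symmetric] by simp
  show "aS u p (n+K) / 2 powr (real (n+K) * q) \<le> (c * 2 powr (real K * d) / \<beta>) * (DS u p K n / 2 powr (real (n+K) * (d + q)))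
           + (c * 2 powr (- (real K * (q - d)))) * (aS u p n / 2 powr (real n * q))"
    unfolding e1 e2 e4 using alg2[OF pos bpos h2] unfolding Z_def[symmetric] Y_def[symmetric] by simp
qed
definition Lb :: "(('n::finite \<Rightarrow> nat) \<Rightarrow> complex) \<Rightarrow> real \<Rightarrow> real \<Rightarrow> nat \<Rightarrow> real" where
  "Lb u p q n = (\<Sum>j\<in>Ablock n. norm (u j) powr p / real (supnorm j) powr q)"

lemma Lb_bounds:
  fixes u :: "('n::finite \<Rightarrow> nat) \<Rightarrow> complex"
  assumes q: "0 < q" and n: "n \<ge> 1"
  shows "aS u p n / 2 powr (real n * q) \<le> Lb u p q n"
    and "Lb u p q n \<le> 2 powr q * (aS u p n / 2 powr (real n * q))"
proof -
  have sb: "2 powr (real n * q) / 2 powr q \<le> real (supnorm j) powr q \<and> real (supnorm j) powr q \<le> 2 powr (real n * q)"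
    if j: "j \<in> Ablock n" for j :: "'n \<Rightarrow> nat"
  proof -
    have h: "2^(n-1) \<le> supnorm j" "supnorm j < 2^n" using j Ablock_iff[OF n] by auto
    have h1: "real (supnorm j) \<le> 2 powr real n" using h(2) by (simp add: powr_realpow less_imp_le)
    have h2: "2 powr real (n-1) \<le> real (supnorm j)"
      using h(1) by (simp add: powr_realpow)
    have "real (supnorm j) powr q \<le> (2 powr real n) powr q" using h1 q by (intro powr_mono2) auto
    also have "\<dots> = 2 powr (real n * q)" by (simp add: powr_powr)
    finally have A: "real (supnorm j) powr q \<le> 2 powr (real n * q)" .
    have "2 powr (real n * q) / 2 powr q = (2 powr real (n-1)) powr q"
      using n by (simp add: powr_powr powr_diff[symmetric] of_nat_diff algebra_simps)
    also have "\<dots> \<le> real (supnorm j) powr q" using h2 q by (intro powr_mono2) auto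
    finally show ?thesis using A by simp
  qed
  have spos: "real (supnorm j) powr q > 0" if "j \<in> Ablock n" for j :: "'n \<Rightarrow> nat"
  proof -
    have "2 powr (real n * q) / 2 powr q > 0" by simp
    then show ?thesis using sb[OF that] by linarith
  qed
  show "aS u p n / 2 powr (real n * q) \<le> Lb u p q n"
    unfolding aS_def Lb_def sum_divide_distrib
    by (intro sum_mono divide_left_mono) (use sb spos in auto)
  have "Lb u p q n \<le> (\<Sum>j\<in>Ablock n. norm (u j) powr p / (2 powr (real n * q) / 2 powr q))"
    unfolding Lb_def by (intro sum_mono divide_left_mono) (use sb spos in auto)
  also have "\<dots> = 2 powr q * (aS u p n / 2 powr (real n * q))"
    unfolding aS_def sum_divide_distrib sum_distrib_left by (intro sum.cong) (auto simp: field_simps)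
  finally show "Lb u p q n \<le> 2 powr q * (aS u p n / 2 powr (real n * q))" .
qed
lemma ennreal_summable [simp]: "(g::'a \<Rightarrow> ennreal) summable_on A"
  by (rule nonneg_summable_on_complete) simp

lemma ennreal_sum_le_infsum:
  fixes g :: "'a \<Rightarrow> ennreal"
  assumes "finite F" "F \<subseteq> A"
  shows "sum g F \<le> infsum g A"
proof -
  have "sum g F = infsum g F" using assms by simp
  also have "\<dots> \<le> infsum g A" using assms by (intro infsum_mono_neutral) auto
  finally show ?thesis .
qed

lemma infsum_le_ennreal_real:
  fixes f :: "'a \<Rightarrow> real"
  assumes "\<And>x. x \<in> A \<Longrightarrow> 0 \<le> f x"
    and "\<And>F. finite F \<Longrightarrow> F \<subseteq> A \<Longrightarrow> sum f F \<le> b"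
  shows "infsum (\<lambda>x. ennreal (f x)) A \<le> ennreal b"
proof (rule infsum_le_finite_sums)
  fix F assume F: "finite F" "F \<subseteq> A"
  have "(\<Sum>x\<in>F. ennreal (f x)) = ennreal (sum f F)" using F assms(1) by (intro sum_ennreal) auto
  also have "\<dots> \<le> ennreal b" using assms(2)[OF F] by (rule ennreal_leI)
  finally show "(\<Sum>x\<in>F. ennreal (f x)) \<le> ennreal b" .
qed simp

lemma sum_le_infsum_real:
  fixes f :: "'a \<Rightarrow> real"
  assumes "\<And>x. x \<in> A \<Longrightarrow> 0 \<le> f x" and "infsum (\<lambda>x. ennreal (f x)) A = ennreal r" and "r \<ge> 0"
    and "finite F" "F \<subseteq> A"
  shows "sum f F \<le> r"
proof -
  have "ennreal (sum f F) = (\<Sum>x\<in>F. ennreal (f x))" using assms by (intro sum_ennreal[symmetric]) auto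
  also have "\<dots> \<le> infsum (\<lambda>x. ennreal (f x)) A" using assms by (intro ennreal_sum_le_infsum) auto
  finally show ?thesis using assms(2,3) by (simp add: ennreal_le_iff)
qed

lemma infsum_blocks:
  fixes f :: "'a \<Rightarrow> real" and B :: "nat \<Rightarrow> 'a set"
  assumes nn: "\<And>x. 0 \<le> f x" and fin: "\<And>n. finite (B n)" and disj: "\<And>n m. n \<noteq> m \<Longrightarrow> B n \<inter> B m = {}"
  shows "infsum (\<lambda>j. ennreal (f j)) (\<Union>n\<in>N. B n) = infsum (\<lambda>n. ennreal (\<Sum>j\<in>B n. f j)) N"
proof (rule antisym)
  show "infsum (\<lambda>j. ennreal (f j)) (\<Union>n\<in>N. B n) \<le> infsum (\<lambda>n. ennreal (\<Sum>j\<in>B n. f j)) N"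
  proof (rule infsum_le_finite_sums)
    fix F assume F: "finite F" "F \<subseteq> (\<Union>n\<in>N. B n)"
    define ch where "ch j = (SOME n. n \<in> N \<and> j \<in> B n)" for j
    have ch: "ch j \<in> N \<and> j \<in> B (ch j)" if "j \<in> F" for j
    proof -
      have "\<exists>n. n \<in> N \<and> j \<in> B n" using F that by blast
      then show ?thesis unfolding ch_def by (rule someI_ex)
    qed
    define G where "G = ch ` F"
    have G1: "finite G" unfolding G_def using F(1) by (rule finite_imageI)
    have G2: "G \<subseteq> N" unfolding G_def using ch by blast
    have sub: "F \<subseteq> (\<Union>n\<in>G. B n)" unfolding G_def using ch by blast
    have finU: "finite (\<Union>n\<in>G. B n)" using G1 fin by blast
    have "(\<Sum>j\<in>F. ennreal (f j)) \<le> (\<Sum>j\<in>(\<Union>n\<in>G. B n). ennreal (f j))"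
      by (rule sum_mono2[OF finU sub]) simp
    also have "\<dots> = (\<Sum>n\<in>G. \<Sum>j\<in>B n. ennreal (f j))"
      by (rule sum.UNION_disjoint[OF G1]) (use fin disj in blast)+
    also have "\<dots> = (\<Sum>n\<in>G. ennreal (\<Sum>j\<in>B n. f j))"
      by (intro sum.cong refl sum_ennreal nn)
    also have "\<dots> \<le> infsum (\<lambda>n. ennreal (\<Sum>j\<in>B n. f j)) N" using G1 G2 by (rule ennreal_sum_le_infsum)
    finally show "(\<Sum>j\<in>F. ennreal (f j)) \<le> infsum (\<lambda>n. ennreal (\<Sum>j\<in>B n. f j)) N" .
  qed (rule ennreal_summable)
next
  show "infsum (\<lambda>n. ennreal (\<Sum>j\<in>B n. f j)) N \<le> infsum (\<lambda>j. ennreal (f j)) (\<Union>n\<in>N. B n)"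
  proof (rule infsum_le_finite_sums)
    fix G assume G: "finite G" "G \<subseteq> N"
    have "(\<Sum>n\<in>G. ennreal (\<Sum>j\<in>B n. f j)) = (\<Sum>n\<in>G. \<Sum>j\<in>B n. ennreal (f j))"
      by (intro sum.cong refl sum_ennreal[symmetric] nn)
    also have "\<dots> = (\<Sum>j\<in>(\<Union>n\<in>G. B n). ennreal (f j))"
      by (rule sum.UNION_disjoint[OF G(1), symmetric]) (use fin disj in blast)+
    also have "\<dots> \<le> infsum (\<lambda>j. ennreal (f j)) (\<Union>n\<in>N. B n)"
      by (rule ennreal_sum_le_infsum) (use G fin in blast)+
    finally show "(\<Sum>n\<in>G. ennreal (\<Sum>j\<in>B n. f j)) \<le> infsum (\<lambda>j. ennreal (f j)) (\<Union>n\<in>N. B n)" .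
  qed (rule ennreal_summable)
qed
lemma seq_case1:
  fixes M R L :: "nat \<Rightarrow> real" and \<kappa> \<gamma> \<epsilon> :: real and K :: nat
  assumes M0: "\<And>n. 0 \<le> M n" and R0: "\<And>n. 0 \<le> R n"
    and step: "\<And>n. n \<ge> 1 \<Longrightarrow> M n \<le> \<kappa> * R n + \<epsilon> * M (n+K)"
    and lo: "\<And>n. n \<ge> 1 \<Longrightarrow> M n \<le> L n" and hi: "\<And>n. n \<ge> 1 \<Longrightarrow> L n \<le> \<gamma> * M n"
    and kp: "\<kappa> > 0" and gp: "\<gamma> > 0" and e0: "0 \<le> \<epsilon>" and e1: "\<epsilon> \<le> 1/2"
    and fin: "infsum (\<lambda>n. ennreal (L n)) {1..} < \<infinity>"
  shows "infsum (\<lambda>n. ennreal (L n)) {1..} \<le> ennreal (2*\<gamma>*\<kappa>) * infsum (\<lambda>n. ennreal (R n)) {1..}"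
proof -
  define S where "S = infsum (\<lambda>n. ennreal (M n)) {1..}"
  have "S \<le> infsum (\<lambda>n. ennreal (L n)) {1..}"
    unfolding S_def by (intro infsum_mono ennreal_summable ennreal_leI lo) auto
  then have "S < \<infinity>" using fin by auto
  then obtain s where s: "S = ennreal s" "s \<ge> 0" by (cases S) auto
  show ?thesis
  proof (cases "infsum (\<lambda>n. ennreal (R n)) {1..}")
    case top
    have "ennreal (2*\<gamma>*\<kappa>) \<noteq> 0" using kp gp by simp
    then show ?thesis using top by (simp add: ennreal_mult_top)
  next
    case (real r)
    have r: "infsum (\<lambda>n. ennreal (R n)) {1..} = ennreal r" "r \<ge> 0" using real by auto
    have "S \<le> ennreal (\<kappa> * r + \<epsilon> * s)"
      unfolding S_def
    proof (rule infsum_le_ennreal_real)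
      fix F :: "nat set" assume F: "finite F" "F \<subseteq> {1..}"
      have "sum M F \<le> (\<Sum>n\<in>F. \<kappa> * R n + \<epsilon> * M (n+K))"
        using F by (intro sum_mono step) auto
      also have "\<dots> = \<kappa> * sum R F + \<epsilon> * (\<Sum>n\<in>F. M (n+K))"
        by (simp add: sum.distrib sum_distrib_left)
      also have "sum R F \<le> r" using sum_le_infsum_real[OF R0 r F] by simp
      also have "(\<Sum>n\<in>F. M (n+K)) = sum M ((\<lambda>n. n+K) ` F)"
        by (subst sum.reindex) (auto simp: inj_on_def)
      also have "\<dots> \<le> s" using F
        by (intro sum_le_infsum_real[OF M0 s(1)[unfolded S_def] s(2)]) auto
      finally show "sum M F \<le> \<kappa> * r + \<epsilon> * s" using kp e0 by (simp add: mult_left_mono)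
    qed (use M0 in auto)
    then have "ennreal s \<le> ennreal (\<kappa> * r + \<epsilon> * s)" using s by simp
    moreover have "\<kappa> * r + \<epsilon> * s \<ge> 0" using s kp e0 r by simp
    ultimately have "s \<le> \<kappa> * r + \<epsilon> * s" using ennreal_le_iff by blast
    moreover have "\<epsilon> * s \<le> s / 2" using e1 s(2) by (simp add: mult_right_mono[of \<epsilon> "1/2" s, simplified])
    ultimately have sle: "s \<le> 2 * \<kappa> * r" by linarith
    have "infsum (\<lambda>n. ennreal (L n)) {1..} \<le> ennreal (\<gamma> * s)"
    proof (rule infsum_le_ennreal_real)
      fix F :: "nat set" assume F: "finite F" "F \<subseteq> {1..}"
      have "sum L F \<le> (\<Sum>n\<in>F. \<gamma> * M n)" using F by (intro sum_mono hi) auto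
      also have "\<dots> = \<gamma> * sum M F" by (simp add: sum_distrib_left)
      also have "\<dots> \<le> \<gamma> * s" using gp sum_le_infsum_real[OF M0 s(1)[unfolded S_def] s(2) F]
        by (simp add: mult_left_mono)
      finally show "sum L F \<le> \<gamma> * s" .
    next
      fix n :: nat assume "n \<in> {1..}"
      then show "0 \<le> L n" using M0[of n] lo[of n] by auto
    qed
    also have "\<dots> \<le> ennreal (2*\<gamma>*\<kappa> * r)" using sle gp
      by (intro ennreal_leI) (simp add: mult_left_mono[of s "2*\<kappa>*r" \<gamma>, simplified] algebra_simps)
    also have "\<dots> = ennreal (2*\<gamma>*\<kappa>) * infsum (\<lambda>n. ennreal (R n)) {1..}"
      using r kp gp by (simp add: ennreal_mult)
    finally show ?thesis .
  qed
qed
lemma seq_case2: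
  fixes M R L :: "nat \<Rightarrow> real" and \<kappa> \<gamma> \<epsilon> :: real and K :: nat
  assumes M0: "\<And>n. 0 \<le> M n" and R0: "\<And>n. 0 \<le> R n"
    and step: "\<And>n. n \<ge> 1 \<Longrightarrow> M (n+K) \<le> \<kappa> * R n + \<epsilon> * M n"
    and lo: "\<And>n. n \<ge> 1 \<Longrightarrow> M n \<le> L n" and hi: "\<And>n. n \<ge> 1 \<Longrightarrow> L n \<le> \<gamma> * M n"
    and kp: "\<kappa> > 0" and gp: "\<gamma> > 0" and e0: "0 \<le> \<epsilon>" and e1: "\<epsilon> \<le> 1/2" and ge: "\<gamma> * \<epsilon> \<le> 1/2"
  shows "infsum (\<lambda>n. ennreal (L n)) {K+1..} \<le> ennreal (2*\<gamma>*\<kappa>) * infsum (\<lambda>n. ennreal (R n)) {1..}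
           + (\<Sum>n\<in>{1..K}. ennreal (L n))"
proof (cases "infsum (\<lambda>n. ennreal (R n)) {1..}")
  case top
  have "ennreal (2*\<gamma>*\<kappa>) \<noteq> 0" using kp gp by simp
  then show ?thesis using top by (simp add: ennreal_mult_top)
next
  case (real r)
  have r: "infsum (\<lambda>n. ennreal (R n)) {1..} = ennreal r" "r \<ge> 0" using real by auto
  have L0: "0 \<le> L n" if "n \<ge> 1" for n using M0[of n] lo[OF that] by linarith
  define Bv where "Bv = (\<Sum>n\<in>{1..K}. M n)"
  have Bv0: "Bv \<ge> 0" unfolding Bv_def by (intro sum_nonneg M0)
  define T where "T N = (\<Sum>n\<in>{K+1..N+K}. M n)" for N
  have Tb: "T N \<le> 2 * \<kappa> * r + 2 * \<epsilon> * Bv" for N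
  proof -
    have "T N = (\<Sum>n\<in>{1..N}. M (n+K))"
      unfolding T_def
      using sum.shift_bounds_cl_nat_ivl[of M 1 K N] by (simp add: add.commute)
    also have "\<dots> \<le> (\<Sum>n\<in>{1..N}. \<kappa> * R n + \<epsilon> * M n)" by (intro sum_mono step) auto
    also have "\<dots> = \<kappa> * (\<Sum>n\<in>{1..N}. R n) + \<epsilon> * (\<Sum>n\<in>{1..N}. M n)"
      by (simp add: sum.distrib sum_distrib_left)
    also have "(\<Sum>n\<in>{1..N}. R n) \<le> r" by (rule sum_le_infsum_real[OF R0 r]) auto
    also have "(\<Sum>n\<in>{1..N}. M n) \<le> (\<Sum>n\<in>{1..N+K}. M n)" by (intro sum_mono2 M0) auto
    also have "(\<Sum>n\<in>{1..N+K}. M n) = Bv + T N"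
    proof -
      have "{1..N+K} = {1..K} \<union> {K+1..N+K}" by auto
      then show ?thesis unfolding Bv_def T_def by (simp add: sum.union_disjoint)
    qed
    finally have "T N \<le> \<kappa> * r + \<epsilon> * (Bv + T N)" using kp e0 by (simp add: mult_left_mono)
    moreover have "T N \<ge> 0" unfolding T_def by (intro sum_nonneg M0)
    moreover have "\<epsilon> * T N \<le> T N / 2" using e1 \<open>T N \<ge> 0\<close> by (simp add: mult_right_mono[of \<epsilon> "1/2" "T N", simplified])
    ultimately show ?thesis by (simp add: algebra_simps)
  qed
  have BL: "Bv \<le> (\<Sum>n\<in>{1..K}. L n)" unfolding Bv_def by (intro sum_mono lo) auto
  have "infsum (\<lambda>n. ennreal (L n)) {K+1..} \<le> ennreal (2*\<gamma>*\<kappa>*r + (\<Sum>n\<in>{1..K}. L n))"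
  proof (rule infsum_le_ennreal_real)
    fix n :: nat assume "n \<in> {K+1..}" then show "0 \<le> L n" using L0 by auto
  next
    fix F :: "nat set" assume F: "finite F" "F \<subseteq> {K+1..}"
    define N where "N = Max (insert 0 F)"
    have FN: "F \<subseteq> {K+1..N+K}"
    proof
      fix x assume x: "x \<in> F"
      have "x \<le> N" unfolding N_def using F(1) x by (intro Max_ge) auto
      moreover have "K+1 \<le> x" using F(2) x by auto
      ultimately show "x \<in> {K+1..N+K}" by auto
    qed
    have "sum L F \<le> (\<Sum>n\<in>{K+1..N+K}. L n)" using FN by (intro sum_mono2 L0) auto
    also have "\<dots> \<le> (\<Sum>n\<in>{K+1..N+K}. \<gamma> * M n)" by (intro sum_mono hi) auto
    also have "\<dots> = \<gamma> * T N" unfolding T_def by (simp add: sum_distrib_left)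
    also have "\<dots> \<le> \<gamma> * (2 * \<kappa> * r + 2 * \<epsilon> * Bv)" using gp Tb[of N] by (simp add: mult_left_mono)
    also have "\<dots> = 2*\<gamma>*\<kappa>*r + 2 * (\<gamma> * \<epsilon>) * Bv" by (simp add: algebra_simps)
    also have "2 * (\<gamma> * \<epsilon>) * Bv \<le> Bv" using mult_right_mono[of "2*(\<gamma>*\<epsilon>)" 1 Bv] ge Bv0 by simp
    also note BL
    finally show "sum L F \<le> 2*\<gamma>*\<kappa>*r + (\<Sum>n\<in>{1..K}. L n)" by simp
  qed
  also have "\<dots> = ennreal (2*\<gamma>*\<kappa>) * infsum (\<lambda>n. ennreal (R n)) {1..} + (\<Sum>n\<in>{1..K}. ennreal (L n))"
  proof -
    have s0: "(\<Sum>n\<in>{1..K}. L n) \<ge> 0" by (intro sum_nonneg L0) auto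
    have "(\<Sum>n\<in>{1..K}. ennreal (L n)) = ennreal (\<Sum>n\<in>{1..K}. L n)" by (intro sum_ennreal L0) auto
    then show ?thesis using r kp gp s0 by (simp add: ennreal_mult ennreal_plus)
  qed
  finally show ?thesis .
qed
lemma ge_union_Ablock:
  "{j::'n::finite \<Rightarrow> nat. 2^a \<le> supnorm j} = (\<Union>n\<in>{a+1..}. Ablock n)"
proof (intro set_eqI iffI)
  fix j :: "'n \<Rightarrow> nat" assume "j \<in> {j. 2^a \<le> supnorm j}"
  then have "j \<in> {j::'n \<Rightarrow> nat. 2^a \<le> supnorm j \<and> supnorm j < 2^(supnorm j)}" by simp
  then have "j \<in> (\<Union>n\<in>{a+1..supnorm j}. Ablock n)" using union_Ablock[of a "supnorm j"] by blast
  then show "j \<in> (\<Union>n\<in>{a+1..}. Ablock n)" by auto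
next
  fix j :: "'n \<Rightarrow> nat" assume "j \<in> (\<Union>n\<in>{a+1..}. Ablock n)"
  then obtain n where n: "a+1 \<le> n" "j \<in> Ablock n" by auto
  then have "j \<in> (\<Union>n\<in>{a+1..n}. Ablock n)" by auto
  then show "j \<in> {j. 2^a \<le> supnorm j}" using union_Ablock[of a n] by blast
qed

lemma nonzero_union_Ablock:
  "UNIV - {\<lambda>_. 0} = (\<Union>n\<in>{1..}. Ablock n :: ('n::finite \<Rightarrow> nat) set)"
proof -
  have "UNIV - {\<lambda>_. 0} = {j::'n \<Rightarrow> nat. 2^0 \<le> supnorm j}"
  proof (intro set_eqI)
    fix j :: "'n \<Rightarrow> nat"
    show "j \<in> UNIV - {\<lambda>_. 0} \<longleftrightarrow> j \<in> {j::'n \<Rightarrow> nat. 2^0 \<le> supnorm j}"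
      using supnorm_zero_iff[of j] by auto
  qed
  then show ?thesis using ge_union_Ablock[of 0, where 'n='n] by simp
qed

lemma beta_pos: "1 - 2 powr (- real CARD('n::finite)) > 0"
proof -
  have "CARD('n) > 0" by simp
  then show ?thesis by (simp add: powr_minus_divide)
qed
theorem lemma2p1:
  fixes u :: "('n::finite \<Rightarrow> nat) \<Rightarrow> complex"
    and s p :: real and K :: nat
  assumes "0 < s" and "0 < p" and "s * p \<noteq> real CARD('n)"
    and "2 powr (s*p + 1) * max (2 powr (p-1)) 1 * 2 powr (- real K * \<bar>s*p - real CARD('n)\<bar>) \<le> 1"
  shows "(s * p < real CARD('n) \<longrightarrow>
           (\<Sum>\<^sub>\<infinity> j\<in>UNIV - {\<lambda>_. 0}. ennreal (norm (u j) powr p / real (supnorm j) powr (s*p))) < \<infinity> \<longrightarrow>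
           (\<Sum>\<^sub>\<infinity> j\<in>UNIV - {\<lambda>_. 0}. ennreal (norm (u j) powr p / real (supnorm j) powr (s*p)))
             \<le> ennreal (Cconst CARD('n) p s K) * Rside K p s u)
       \<and> (real CARD('n) < s * p \<longrightarrow>
           (\<Sum>\<^sub>\<infinity> j\<in>{j. 2^K \<le> supnorm j}. ennreal (norm (u j) powr p / real (supnorm j) powr (s*p)))
             \<le> ennreal (Cconst CARD('n) p s K) * Rside K p s u
               + (\<Sum>\<^sub>\<infinity> j\<in>{j. 1 \<le> supnorm j \<and> supnorm j < 2^K}. ennreal (norm (u j) powr p / real (supnorm j) powr (s*p))))"
proof -
  define q where "q = s * p"
  define d where "d = real CARD('n)"
  define c where "c = max (2 powr (p-1)) (1::real)"
  define \<beta> where "\<beta> = 1 - 2 powr (- real CARD('n))"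
  define M where "M n = aS u p n / 2 powr (real n * q)" for n
  define R where "R n = DS u p K n / 2 powr (real (n+K) * (d + q))" for n
  define L where "L n = Lb u p q n" for n
  define g where "g j = norm (u j) powr p / real (supnorm j) powr (s*p)" for j
  have qpos: "q > 0" unfolding q_def using assms by simp
  have bpos: "\<beta> > 0" unfolding \<beta>_def by (rule beta_pos)
  have cpos: "c \<ge> 1" unfolding c_def by simp
  have M0: "0 \<le> M n" for n unfolding M_def aS_def by (intro divide_nonneg_nonneg sum_nonneg) auto
  have R0: "0 \<le> R n" for n unfolding R_def DS_def by (intro divide_nonneg_nonneg sum_nonneg) auto
  have g0: "0 \<le> g j" for j unfolding g_def by (intro divide_nonneg_nonneg) auto
  have lo: "M n \<le> L n" and hi: "L n \<le> 2 powr q * M n" if "n \<ge> 1" for n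
    unfolding M_def L_def using Lb_bounds[OF qpos that, of u p] by auto
  have Rs: "Rside K p s u = infsum (\<lambda>n. ennreal (R n)) {1..}"
    unfolding Rside_def
  proof (intro infsum_cong)
    fix n :: nat
    have "(\<Sum>j\<in>Ablock n. \<Sum>m\<in>Ablock (n+K).
      ennreal (norm (u j - u m) powr p / 2 powr (real (n+K) * (real CARD('n) + s*p))))
      = (\<Sum>j\<in>Ablock n. ennreal (\<Sum>m\<in>Ablock (n+K).
           norm (u j - u m) powr p / 2 powr (real (n+K) * (real CARD('n) + s*p))))"
      by (intro sum.cong refl sum_ennreal) auto
    also have "\<dots> = ennreal (\<Sum>j\<in>Ablock n. \<Sum>m\<in>Ablock (n+K).
           norm (u j - u m) powr p / 2 powr (real (n+K) * (real CARD('n) + s*p)))"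
      by (intro sum_ennreal sum_nonneg) auto
    also have "\<dots> = ennreal (R n)"
      unfolding R_def DS_def d_def q_def by (simp add: sum_divide_distrib)
    finally show "(\<Sum>j\<in>Ablock n. \<Sum>m\<in>Ablock (n+K).
      ennreal (norm (u j - u m) powr p / 2 powr (real (n+K) * (real CARD('n) + s*p)))) = ennreal (R n)" .
  qed
  have blocks: "infsum (\<lambda>j. ennreal (g j)) (\<Union>n\<in>N. Ablock n) = infsum (\<lambda>n. ennreal (L n)) N" for N
    unfolding L_def Lb_def g_def q_def
    by (rule infsum_blocks[OF _ finite_Ablock Ablock_disj]) auto
  have C_eq: "Cconst CARD('n) p s K = 2 powr (q + 1 + real K * min d q) * c / \<beta>"
    unfolding Cconst_def q_def d_def c_def \<beta>_def by simp
  have A4: "2 powr (q + 1) * c * 2 powr (- real K * \<bar>q - d\<bar>) \<le> 1"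
    using assms(4) unfolding q_def d_def c_def by simp
  have two: "2 \<le> (2::real) powr (q + 1)"
  proof -
    have "(2::real) powr 1 \<le> 2 powr (q+1)" using qpos by (intro powr_mono) auto
    then show ?thesis by simp
  qed
  show ?thesis
  proof (intro conjI impI)
    assume lt: "s * p < real CARD('n)"
    then have qd: "q < d" unfolding q_def d_def .
    define \<kappa> where "\<kappa> = c * 2 powr (real K * q) / \<beta>"
    define \<epsilon> where "\<epsilon> = c * 2 powr (- (real K * (d - q)))"
    have step: "M n \<le> \<kappa> * R n + \<epsilon> * M (n+K)" if "n \<ge> 1" for n
      using block_ineqs(1)[OF assms(2) that, where u=u and q=q and K=K] unfolding M_def R_def \<kappa>_def \<epsilon>_def c_def \<beta>_def d_def
      by simp
    have e0: "0 \<le> \<epsilon>" unfolding \<epsilon>_def using cpos by simp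
    have "2 powr (q + 1) * \<epsilon> \<le> 1" using A4 qd unfolding \<epsilon>_def by (simp add: algebra_simps)
    then have e1: "\<epsilon> \<le> 1/2" using two e0 mult_right_mono[OF two e0] by linarith
    have kp: "\<kappa> > 0" unfolding \<kappa>_def using cpos bpos by simp
    have C: "Cconst CARD('n) p s K = 2 * 2 powr q * \<kappa>"
      unfolding C_eq \<kappa>_def using qd by (simp add: powr_add algebra_simps)
    assume fin: "(\<Sum>\<^sub>\<infinity> j\<in>UNIV - {\<lambda>_. 0}. ennreal (norm (u j) powr p / real (supnorm j) powr (s*p))) < \<infinity>"
    have LHS: "(\<Sum>\<^sub>\<infinity> j\<in>UNIV - {\<lambda>_. 0}. ennreal (norm (u j) powr p / real (supnorm j) powr (s*p)))
       = infsum (\<lambda>n. ennreal (L n)) {1..}"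
      unfolding nonzero_union_Ablock using blocks unfolding g_def by simp
    show "(\<Sum>\<^sub>\<infinity> j\<in>UNIV - {\<lambda>_. 0}. ennreal (norm (u j) powr p / real (supnorm j) powr (s*p)))
             \<le> ennreal (Cconst CARD('n) p s K) * Rside K p s u"
      unfolding LHS Rs C using seq_case1[where M=M and R=R and L=L and K=K and \<gamma>="2 powr q", OF M0 R0 step lo hi kp _ e0 e1] fin LHS by simp
  next
    assume gt: "real CARD('n) < s * p"
    then have qd: "d < q" unfolding q_def d_def .
    define \<kappa> where "\<kappa> = c * 2 powr (real K * d) / \<beta>"
    define \<epsilon> where "\<epsilon> = c * 2 powr (- (real K * (q - d)))"
    have step: "M (n+K) \<le> \<kappa> * R n + \<epsilon> * M n" if "n \<ge> 1" for n
      using block_ineqs(2)[OF assms(2) that, where u=u and q=q and K=K] unfolding M_def R_def \<kappa>_def \<epsilon>_def c_def \<beta>_def d_def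
      by simp
    have e0: "0 \<le> \<epsilon>" unfolding \<epsilon>_def using cpos by simp
    have "2 powr (q + 1) * \<epsilon> \<le> 1" using A4 qd unfolding \<epsilon>_def by (simp add: algebra_simps)
    then have ge: "2 powr q * \<epsilon> \<le> 1/2" by (simp add: powr_add)
    have g1: "1 \<le> (2::real) powr q" using qpos by (intro ge_one_powr_ge_zero) auto
    have e1: "\<epsilon> \<le> 1/2" using ge mult_right_mono[OF g1 e0] by linarith
    have kp: "\<kappa> > 0" unfolding \<kappa>_def using cpos bpos by simp
    have C: "Cconst CARD('n) p s K = 2 * 2 powr q * \<kappa>"
      unfolding C_eq \<kappa>_def using qd by (simp add: powr_add algebra_simps)
    have LHS: "(\<Sum>\<^sub>\<infinity> j\<in>{j. 2^K \<le> supnorm j}. ennreal (norm (u j) powr p / real (supnorm j) powr (s*p)))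
       = infsum (\<lambda>n. ennreal (L n)) {K+1..}"
      unfolding ge_union_Ablock using blocks unfolding g_def by simp
    have Ex: "(\<Sum>\<^sub>\<infinity> j\<in>{j. 1 \<le> supnorm j \<and> supnorm j < 2^K}. ennreal (norm (u j) powr p / real (supnorm j) powr (s*p)))
       = (\<Sum>n\<in>{1..K}. ennreal (L n))"
      using union_Ablock[of 0 K, where 'n='n] blocks[of "{1..K}"] unfolding g_def by simp
    show "(\<Sum>\<^sub>\<infinity> j\<in>{j. 2^K \<le> supnorm j}. ennreal (norm (u j) powr p / real (supnorm j) powr (s*p)))
             \<le> ennreal (Cconst CARD('n) p s K) * Rside K p s u
               + (\<Sum>\<^sub>\<infinity> j\<in>{j. 1 \<le> supnorm j \<and> supnorm j < 2^K}. ennreal (norm (u j) powr p / real (supnorm j) powr (s*p)))"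
      unfolding LHS Rs C Ex using seq_case2[where M=M and R=R and L=L and K=K and \<gamma>="2 powr q", OF M0 R0 step lo hi kp _ e0 e1 ge] by simp
  qed
qed

end
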